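(* Let $\mathbb{I}>0$, $\xi>0$, and for $\ell>0$ let $g_\xi(\ell)=4\ell^2\int_0^\infty u^2\,\Phi\big(-\frac{u\ell\xi\sqrt{\mathbb{I}}}{2}\big)\phi(u)\,du$. Then $g_\xi$ is maximized at $\ell_{opt}=\frac{2.426}{\xi\sqrt{\mathbb{I}}}$ (constant to three decimals), and $$\alpha_{opt}=4\int_0^\infty\Phi\Big(-\frac{u\ell_{opt}\xi\sqrt{\mathbb{I}}}{2}\Big)\phi(u)\,du=0.439$$ up to three decimal places.
   Context: $\Phi,\phi$ are the standard normal cdf and density. $g_\xi$ is the diffusion speed of the limiting diffusion of additive TMCMC for independent, non-identically scaled targets $\prod_j\theta_j(d)f(\theta_j(d)x_j)$, where $\mathbb{I}=E_f[(f'/f)^2]$ and $\xi$ is a limiting constant determined by the scalings. *)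

theory Defs
  imports "HOL-Probability.Probability"
begin

definition Phi :: "real \<Rightarrow> real" where
  "Phi x = (LBINT t:{..x}. std_normal_density t)"

definition g_speed :: "real \<Rightarrow> real \<Rightarrow> real \<Rightarrow> real" where
  "g_speed II xi l = 4 * l\<^sup>2 *
     (LBINT u:{0..}. u\<^sup>2 * Phi (- (u * l * xi * sqrt II) / 2) * std_normal_density u)"

definition alpha_acc :: "real \<Rightarrow> real \<Rightarrow> real \<Rightarrow> real" where
  "alpha_acc II xi l = 4 *
     (LBINT u:{0..}. Phi (- (u * l * xi * sqrt II) / 2) * std_normal_density u)"

end

theory Submission
  imports Defs "HOL-Real_Asymp.Real_Asymp"
begin


lemma Phi_nn: "ennreal (Phi x) = (\<integral>\<^sup>+t. ennreal (std_normal_density t * indicator {..x} t) \<partial>lborel)"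
proof -
  have i: "integrable lborel (\<lambda>t. std_normal_density t * indicator {..x} t)"
    by (intro integrable_real_mult_indicator) auto
  have "Phi x = (\<integral>t. std_normal_density t * indicator {..x} t \<partial>lborel)"
    unfolding Phi_def set_lebesgue_integral_def by (simp add: mult.commute)
  then show ?thesis using nn_integral_eq_integral[OF i] by simp
qed

lemma Phi_nonneg: "Phi x \<ge> 0"
  unfolding Phi_def set_lebesgue_integral_def by (intro Bochner_Integration.integral_nonneg) (simp add: indicator_def)

lemma Phi_subst:
  assumes u: "u > 0"
  shows "ennreal (Phi (-(s*u))) = (\<integral>\<^sup>+w. ennreal (u * std_normal_density (w*u) * indicator {s..} w) \<partial>lborel)"
proof -
  have "ennreal (Phi (-(s*u))) = \<bar>-u\<bar> * (\<integral>\<^sup>+w. ennreal (std_normal_density (0 + (-u)*w) * indicator {..-(s*u)} (0 + (-u)*w)) \<partial>lborel)"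
    unfolding Phi_nn by (rule nn_integral_real_affine) (use u in auto)
  also have "\<dots> = (\<integral>\<^sup>+w. ennreal u * ennreal (std_normal_density (w*u) * indicator {s..} w) \<partial>lborel)"
    using u by (subst nn_integral_cmult) (auto intro!: nn_integral_cong simp: std_normal_density_def indicator_def mult.commute)
  also have "\<dots> = (\<integral>\<^sup>+w. ennreal (u * std_normal_density (w*u) * indicator {s..} w) \<partial>lborel)"
    using u by (intro nn_integral_cong) (simp add: ennreal_mult mult.assoc)
  finally show ?thesis .
qed




lemma phi_prod: "std_normal_density u * std_normal_density (w*u) = exp (-((1+w^2)*u^2/2)) / (2*pi)"
proof -
  have "sqrt (2*pi) * sqrt (2*pi) = 2*pi" by simp
  then show ?thesis unfolding std_normal_density_def
    by (simp add: field_simps exp_add[symmetric] power_mult_distrib)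
qed

lemma lim0: assumes "a > 0" shows "((\<lambda>u. - exp (-(a*u^2/2)) / (2*pi*a)) \<longlongrightarrow> 0) at_top"
  using assms by real_asymp

lemma lim2: assumes "a > 0" shows "((\<lambda>u. - (u^2/a + 2/a^2) * exp (-(a*u^2/2)) / (2*pi)) \<longlongrightarrow> 0) at_top"
  using assms by real_asymp

lemma inner0: "(\<integral>\<^sup>+u. ennreal (u * (std_normal_density u * std_normal_density (w*u))) * indicator {0..} u \<partial>lborel)
   = ennreal (1 / (2*pi*(1+w^2)))"
proof -
  define a where "a = 1 + w^2"
  have a: "a > 0" unfolding a_def by (simp add: add_pos_nonneg)
  have "(\<integral>\<^sup>+u. ennreal (u * exp (-(a*u^2/2)) / (2*pi)) * indicator {0..} u \<partial>lborel)
      = 0 - (- exp (-(a*0^2/2)) / (2*pi*a))"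
    apply (rule nn_integral_FTC_atLeast[where F="\<lambda>u. - exp (-(a*u^2/2)) / (2*pi*a)"])
       apply measurable
      using a apply (auto intro!: derivative_eq_intros simp: field_simps) [1]
     apply simp
    using lim0[OF a] by simp
  then show ?thesis unfolding phi_prod a_def[symmetric] by (simp add: times_divide_eq_right)
qed

lemma inner2: "(\<integral>\<^sup>+u. ennreal (u^3 * (std_normal_density u * std_normal_density (w*u))) * indicator {0..} u \<partial>lborel)
   = ennreal (1 / (pi*(1+w^2)^2))"
proof -
  define a where "a = 1 + w^2"
  have a: "a > 0" unfolding a_def by (simp add: add_pos_nonneg)
  have "(\<integral>\<^sup>+u. ennreal (u^3 * exp (-(a*u^2/2)) / (2*pi)) * indicator {0..} u \<partial>lborel)
      = 0 - (- (0^2/a + 2/a^2) * exp (-(a*0^2/2)) / (2*pi))"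
    apply (rule nn_integral_FTC_atLeast[where F="\<lambda>u. - (u^2/a + 2/a^2) * exp (-(a*u^2/2)) / (2*pi)"])
       apply measurable
      using a apply (auto intro!: derivative_eq_intros simp: field_simps power2_eq_square power3_eq_cube) [1]
     apply simp
    using lim2[OF a] by simp
  then show ?thesis unfolding phi_prod a_def[symmetric] by (simp add: times_divide_eq_right power2_eq_square mult_ac)
qed




lemma main_swap:
  assumes inner: "\<And>w. (\<integral>\<^sup>+u. ennreal (u^Suc k * (std_normal_density u * std_normal_density (w*u))) * indicator {0..} u \<partial>lborel) = ennreal (c w)"
  shows "(\<integral>\<^sup>+u. ennreal (indicator {0..} u * (u^k * Phi (-(s*u)) * std_normal_density u)) \<partial>lborel)
       = (\<integral>\<^sup>+w. ennreal (c w) * indicator {s..} w \<partial>lborel)"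
proof -
  let ?f = "\<lambda>u w. ennreal (u^Suc k * (std_normal_density u * std_normal_density (w*u))) * indicator {0<..} u * indicator {s..} w"
  have "(\<integral>\<^sup>+u. ennreal (indicator {0..} u * (u^k * Phi (-(s*u)) * std_normal_density u)) \<partial>lborel)
      = (\<integral>\<^sup>+u. (\<integral>\<^sup>+w. ?f u w \<partial>lborel) \<partial>lborel)"
  proof (rule nn_integral_cong_AE)
    show "AE u in lborel. ennreal (indicator {0..} u * (u^k * Phi (-(s*u)) * std_normal_density u)) = (\<integral>\<^sup>+w. ?f u w \<partial>lborel)"
      using AE_lborel_singleton[of 0]
    proof eventually_elim
      case (elim u)
      show ?case
      proof (cases "u > 0")
        case True
        have "ennreal (indicator {0..} u * (u^k * Phi (-(s*u)) * std_normal_density u))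
            = ennreal (u^k * std_normal_density u) * ennreal (Phi (-(s*u)))"
          using True by (simp add: ennreal_mult[symmetric] Phi_nonneg mult_ac)
        also have "\<dots> = ennreal (u^k * std_normal_density u) * (\<integral>\<^sup>+w. ennreal (u * std_normal_density (w*u) * indicator {s..} w) \<partial>lborel)"
          by (simp add: Phi_subst[OF True])
        also have "\<dots> = (\<integral>\<^sup>+w. ennreal (u^k * std_normal_density u) * ennreal (u * std_normal_density (w*u) * indicator {s..} w) \<partial>lborel)"
          by (rule nn_integral_cmult[symmetric]) simp
        also have "\<dots> = (\<integral>\<^sup>+w. ?f u w \<partial>lborel)"
          using True by (intro nn_integral_cong) (auto simp: ennreal_mult[symmetric] indicator_def mult_ac)
        finally show ?thesis .
      next
        case False
        with elim have "u < 0" by auto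
        then show ?thesis by simp
      qed
    qed
  qed
  also have "\<dots> = (\<integral>\<^sup>+w. (\<integral>\<^sup>+u. ?f u w \<partial>lborel) \<partial>lborel)"
    by (rule lborel_pair.Fubini'[symmetric]) measurable
  also have "\<dots> = (\<integral>\<^sup>+w. ennreal (c w) * indicator {s..} w \<partial>lborel)"
  proof (rule nn_integral_cong)
    fix w
    have "(\<integral>\<^sup>+u. ?f u w \<partial>lborel) = (\<integral>\<^sup>+u. (ennreal (u^Suc k * (std_normal_density u * std_normal_density (w*u))) * indicator {0..} u) * indicator {s..} w \<partial>lborel)"
      by (intro nn_integral_cong_AE) (use AE_lborel_singleton[of 0] in \<open>eventually_elim, auto simp: indicator_def\<close>)
    also have "\<dots> = (\<integral>\<^sup>+u. ennreal (u^Suc k * (std_normal_density u * std_normal_density (w*u))) * indicator {0..} u \<partial>lborel) * indicator {s..} w"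
      by (rule nn_integral_multc) simp
    also have "\<dots> = ennreal (c w) * indicator {s..} w"
      by (simp only: inner)
    finally show "(\<integral>\<^sup>+u. ?f u w \<partial>lborel) = ennreal (c w) * indicator {s..} w" .
  qed
  finally show ?thesis .
qed




lemma ops_nz: "1 + x*x \<noteq> (0::real)" "1 + x^2 \<noteq> (0::real)" "1 + x*x > (0::real)" "1 + x^2 > (0::real)"
  by (auto simp: add_pos_nonneg power2_eq_square) (smt (verit) zero_le_square)+

lemma der_arctan2: "((\<lambda>w. w/(1+w^2) + arctan w) has_real_derivative 2/(1+x^2)^2) (at x)"
proof -
  have "((\<lambda>w. w/(1+w^2) + arctan w) has_real_derivative
        ((1*(1+x^2) - x*(2*x))/(1+x^2)^2 + 1/(1+x^2))) (at x)"
    by (intro derivative_intros DERIV_quotient) (auto simp: ops_nz power2_eq_square inverse_eq_divide intro!: derivative_eq_intros)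
  moreover have "(1*(1+x^2) - x*(2*x))/(1+x^2)^2 + 1/(1+x^2) = 2/(1+x^2)^2"
  proof -
    have B: "1+x^2 \<noteq> 0" by (rule ops_nz)
    have "(1*(1+x^2) - x*(2*x))/(1+x^2)^2 + 1/(1+x^2) = (1*(1+x^2) - x*(2*x))/(1+x^2)^2 + (1+x^2)/(1+x^2)^2"
      using B by (simp add: power2_eq_square[of "1+x^2"])
    also have "\<dots> = ((1*(1+x^2) - x*(2*x)) + (1+x^2))/(1+x^2)^2" by (rule add_divide_distrib[symmetric])
    also have "(1*(1+x^2) - x*(2*x)) + (1+x^2) = 2" by (simp add: power2_eq_square)
    finally show ?thesis .
  qed
  ultimately show ?thesis by (simp add: inverse_eq_divide)
qed

lemma outer0: "(\<integral>\<^sup>+w. ennreal (1 / (2*pi*(1+w^2))) * indicator {s..} w \<partial>lborel)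
   = ennreal ((pi/2 - arctan s) / (2*pi))"
proof -
  have "(\<integral>\<^sup>+w. ennreal (1 / (2*pi*(1+w^2))) * indicator {s..} w \<partial>lborel)
      = (pi/2)/(2*pi) - arctan s / (2*pi)"
  proof (rule nn_integral_FTC_atLeast[where F="\<lambda>w. arctan w / (2*pi)"])
    fix x
    show "DERIV (\<lambda>w. arctan w / (2*pi)) x :> 1 / (2*pi*(1+x^2))"
      using DERIV_cdivide[OF DERIV_arctan[of x], of "2*pi"] by (simp add: inverse_eq_divide mult.commute)
    show "0 \<le> 1 / (2*pi*(1+x^2))" using ops_nz[of x] by simp
  next
    show "((\<lambda>w. arctan w / (2*pi)) \<longlongrightarrow> (pi/2)/(2*pi)) at_top"
      by (intro tendsto_divide tendsto_arctan_at_top tendsto_const) auto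
  qed measurable
  then show ?thesis by (simp add: diff_divide_distrib)
qed

lemma D_nonneg: "0 \<le> pi/2 - arctan s - s/(1+s^2)"
proof -
  let ?F = "\<lambda>w. w/(1+w^2) + arctan w"
  have lim: "(?F \<longlongrightarrow> pi/2) at_top" by real_asymp
  have "?F s \<le> pi/2"
  proof (rule tendsto_lowerbound[OF lim])
    show "\<forall>\<^sub>F x in at_top. ?F s \<le> ?F x"
      using eventually_ge_at_top[of s]
    proof eventually_elim
      case (elim x)
      show ?case using der_arctan2 elim
        by (intro DERIV_nonneg_imp_nondecreasing[of s x ?F]) (auto intro!: exI[of _ "2/(1+_^2)^2"])
    qed
  qed simp
  then show ?thesis by linarith
qed

lemma outer2: "(\<integral>\<^sup>+w. ennreal (1 / (pi*(1+w^2)^2)) * indicator {s..} w \<partial>lborel)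
   = ennreal ((pi/2 - arctan s - s/(1+s^2)) / (2*pi))"
proof -
  have "(\<integral>\<^sup>+w. ennreal (1 / (pi*(1+w^2)^2)) * indicator {s..} w \<partial>lborel)
      = (pi/2)/(2*pi) - (s/(1+s^2) + arctan s) / (2*pi)"
  proof (rule nn_integral_FTC_atLeast[where F="\<lambda>w. (w/(1+w^2) + arctan w) / (2*pi)"])
    fix x
    show "DERIV (\<lambda>w. (w/(1+w^2) + arctan w) / (2*pi)) x :> 1 / (pi*(1+x^2)^2)"
      using DERIV_cdivide[OF der_arctan2[of x], of "2*pi"] by (simp add: mult_ac)
    show "0 \<le> 1 / (pi*(1+x^2)^2)" using ops_nz[of x] by simp
  next
    show "((\<lambda>w. (w/(1+w^2) + arctan w) / (2*pi)) \<longlongrightarrow> (pi/2)/(2*pi)) at_top"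
      by real_asymp
  qed measurable
  moreover have "(pi/2)/(2*pi) - (s/(1+s^2) + arctan s) / (2*pi) = (pi/2 - arctan s - s/(1+s^2)) / (2*pi)"
    by (simp add: field_simps)
  ultimately show ?thesis by simp
qed




lemma Phi_mono: "mono Phi"
proof
  fix x y :: real assume "x \<le> y"
  have "ennreal (Phi x) \<le> ennreal (Phi y)"
    unfolding Phi_nn using \<open>x \<le> y\<close>
    by (intro nn_integral_mono) (auto simp: indicator_def)
  then show "Phi x \<le> Phi y" using Phi_nonneg[of y] by simp
qed

lemma Phi_meas[measurable]: "Phi \<in> borel_measurable borel"
  by (rule borel_measurable_mono[OF Phi_mono])

lemma g_closed:
  "g_speed II xi l = 4*l^2 * ((pi/2 - arctan (l*xi * sqrt II/2) - (l*xi * sqrt II/2)/(1+(l*xi * sqrt II/2)^2))/(2*pi))"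
proof -
  define s where "s = l*xi * sqrt II/2"
  have eq: "(\<lambda>u. indicator {0..} u *\<^sub>R (u\<^sup>2 * Phi (- (u * l * xi * sqrt II) / 2) * std_normal_density u))
     = (\<lambda>u. indicator {0..} u * (u^2 * Phi (-(s*u)) * std_normal_density u))"
    by (auto simp: s_def mult_ac)
  have "(LBINT u:{0..}. u\<^sup>2 * Phi (- (u * l * xi * sqrt II) / 2) * std_normal_density u)
      = enn2real (\<integral>\<^sup>+u. ennreal (indicator {0..} u * (u^2 * Phi (-(s*u)) * std_normal_density u)) \<partial>lborel)"
    unfolding set_lebesgue_integral_def eq
    by (rule integral_eq_nn_integral) (auto simp: Phi_nonneg indicator_def)
  also have "(\<integral>\<^sup>+u. ennreal (indicator {0..} u * (u^2 * Phi (-(s*u)) * std_normal_density u)) \<partial>lborel)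
      = (\<integral>\<^sup>+w. ennreal (1 / (pi*(1+w^2)^2)) * indicator {s..} w \<partial>lborel)"
    by (rule main_swap) (use inner2 in \<open>simp add: numeral_3_eq_3\<close>)
  also have "\<dots> = ennreal ((pi/2 - arctan s - s/(1+s^2)) / (2*pi))" by (rule outer2)
  finally show ?thesis unfolding g_speed_def s_def[symmetric]
    using D_nonneg[of s] by simp
qed

lemma alpha_closed:
  "alpha_acc II xi l = 4 * ((pi/2 - arctan (l*xi * sqrt II/2))/(2*pi))"
proof -
  define s where "s = l*xi * sqrt II/2"
  have eq: "(\<lambda>u. indicator {0..} u *\<^sub>R (Phi (- (u * l * xi * sqrt II) / 2) * std_normal_density u))
     = (\<lambda>u. indicator {0..} u * (u^0 * Phi (-(s*u)) * std_normal_density u))"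
    by (auto simp: s_def mult_ac)
  have "(LBINT u:{0..}. Phi (- (u * l * xi * sqrt II) / 2) * std_normal_density u)
      = enn2real (\<integral>\<^sup>+u. ennreal (indicator {0..} u * (u^0 * Phi (-(s*u)) * std_normal_density u)) \<partial>lborel)"
    unfolding set_lebesgue_integral_def eq
    by (rule integral_eq_nn_integral) (auto simp: Phi_nonneg indicator_def)
  also have "(\<integral>\<^sup>+u. ennreal (indicator {0..} u * (u^0 * Phi (-(s*u)) * std_normal_density u)) \<partial>lborel)
      = (\<integral>\<^sup>+w. ennreal (1 / (2*pi*(1+w^2))) * indicator {s..} w \<partial>lborel)"
    by (rule main_swap) (use inner0 in simp)
  also have "\<dots> = ennreal ((pi/2 - arctan s) / (2*pi))" by (rule outer0)
  finally show ?thesis unfolding alpha_acc_def s_def[symmetric]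
    using arctan_ubound[of s] by simp
qed




lemma poly7: "((\<lambda>t. t - t^3/3 + t^5/5 - t^7/7) has_real_derivative (1 - x^2 + x^4 - x^6)) (at x)"
  by (auto intro!: derivative_eq_intros simp: eval_nat_numeral)
lemma poly5: "((\<lambda>t. t - t^3/3 + t^5/5) has_real_derivative (1 - x^2 + x^4)) (at x)"
  by (auto intro!: derivative_eq_intros simp: eval_nat_numeral)
lemma id8: "inverse (1+x^2) - (1 - x^2 + x^4 - x^6) = (x::real)^8 / (1+x^2)"
proof -
  have nz: "1 + x^2 \<noteq> 0" by (smt (verit) zero_le_power2)
  have "(1 - x^2 + x^4 - x^6) * (1+x^2) = 1 - x^8" by (simp add: algebra_simps eval_nat_numeral)
  then show ?thesis using nz by (simp add: inverse_eq_divide divide_simps)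
qed
lemma id6: "(1 - x^2 + x^4) - inverse (1+x^2) = (x::real)^6 / (1+x^2)"
proof -
  have nz: "1 + x^2 \<noteq> 0" by (smt (verit) zero_le_power2)
  have "(1 - x^2 + x^4) * (1+x^2) = 1 + x^6" by (simp add: algebra_simps eval_nat_numeral)
  then show ?thesis using nz by (simp add: inverse_eq_divide divide_simps)
qed

lemma arctan_lb7: assumes "0 \<le> y" shows "y - y^3/3 + y^5/5 - y^7/7 \<le> arctan y"
proof -
  let ?h = "\<lambda>t. arctan t - (t - t^3/3 + t^5/5 - t^7/7)"
  have "?h 0 \<le> ?h y"
  proof (rule DERIV_nonneg_imp_nondecreasing[OF assms])
    fix x :: real
    have "(?h has_real_derivative (inverse (1+x^2) - (1 - x^2 + x^4 - x^6))) (at x)"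
      by (rule DERIV_diff[OF DERIV_arctan poly7])
    then have d: "(?h has_real_derivative (x^8 / (1+x^2))) (at x)" by (simp only: id8)
    have "0 < 1 + x^2" by (smt (verit) zero_le_power2)
    moreover have "0 \<le> x^8" by (simp add: zero_le_even_power)
    ultimately have "0 \<le> x^8 / (1+x^2)" by simp
    with d show "\<exists>d. (?h has_real_derivative d) (at x) \<and> 0 \<le> d" by blast
  qed
  then show ?thesis by simp
qed

lemma arctan_ub5: assumes "0 \<le> y" shows "arctan y \<le> y - y^3/3 + y^5/5"
proof -
  let ?h = "\<lambda>t. (t - t^3/3 + t^5/5) - arctan t"
  have "?h 0 \<le> ?h y"
  proof (rule DERIV_nonneg_imp_nondecreasing[OF assms])
    fix x :: real
    have "(?h has_real_derivative ((1 - x^2 + x^4) - inverse (1+x^2))) (at x)"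
      by (rule DERIV_diff[OF poly5 DERIV_arctan])
    then have d: "(?h has_real_derivative (x^6 / (1+x^2))) (at x)" by (simp only: id6)
    have "0 < 1 + x^2" by (smt (verit) zero_le_power2)
    moreover have "0 \<le> x^6" by (simp add: zero_le_even_power)
    ultimately have "0 \<le> x^6 / (1+x^2)" by simp
    with d show "\<exists>d. (?h has_real_derivative d) (at x) \<and> 0 \<le> d" by blast
  qed
  then show ?thesis by simp
qed

lemma pi_bnds: "3141592653588/1000000000000 \<le> pi" "pi \<le> 31415926535899/10000000000000"
  using pi_approx by simp_all

lemma lin_lo: "(A::real) \<le> P \<Longrightarrow> P \<le> c1 \<Longrightarrow> X + Y \<le> c2 \<Longrightarrow> lp \<le> pi \<Longrightarrow> c1 + c2 < lp/4 \<Longrightarrow> 0 < pi/2 - (pi/4 + A) - X - Y"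
  by linarith
lemma lin_hi: "(P::real) \<le> A \<Longrightarrow> c1 \<le> P \<Longrightarrow> c2 \<le> X + Y \<Longrightarrow> pi \<le> up \<Longrightarrow> up/4 < c1 + c2 \<Longrightarrow> pi/2 - (pi/4 + A) - X - Y < 0"
  by linarith

lemma arctan_lo: "arctan (4851/4000) = pi/4 + arctan (851/8851)"
  using arctan_add[of 1 "851/8851"] by (simp add: arctan_one)

lemma arctan_hi: "arctan (4853/4000) = pi/4 + arctan (853/8853)"
  using arctan_add[of 1 "853/8853"] by (simp add: arctan_one)

definition Kf :: "real \<Rightarrow> real" where
  "Kf s = pi/2 - arctan s - s/(1+s^2) - s/(1+s^2)^2"

lemma K_lo: "Kf (4851/4000) > 0"
proof -
  have a: "arctan (851/8851) \<le> (851/8851) - (851/8851)^3/3 + (851/8851)^5/5" by (rule arctan_ub5) simp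
  have p: "(851/8851::real) - (851/8851)^3/3 + (851/8851)^5/5 \<le> 95852699424/1000000000000" by (simp add: power_divide)
  have r: "(4851/4000::real)/(1+(4851/4000)^2) + (4851/4000)/(1+(4851/4000)^2)^2 \<le> 689499829593/1000000000000"
    by (simp add: power_divide)
  show ?thesis unfolding Kf_def arctan_lo by (rule lin_lo[OF a p r pi_bnds(1)]) simp
qed

lemma K_hi: "Kf (4853/4000) < 0"
proof -
  have a: "(853/8853) - (853/8853)^3/3 + (853/8853)^5/5 - (853/8853)^7/7 \<le> arctan (853/8853)" by (rule arctan_lb7) simp
  have p: "96055005588/1000000000000 \<le> (853/8853::real) - (853/8853)^3/3 + (853/8853)^5/5 - (853/8853)^7/7" by (simp add: power_divide)
  have r: "689348148641/1000000000000 \<le> (4853/4000::real)/(1+(4853/4000)^2) + (4853/4000)/(1+(4853/4000)^2)^2"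
    by (simp add: power_divide)
  show ?thesis unfolding Kf_def arctan_hi by (rule lin_hi[OF a p r pi_bnds(2)]) simp
qed




lemma nzs: "1 + x^2 \<noteq> (0::real)" "0 < 1 + x^2" 
  by (smt (verit) zero_le_power2)+

lemma idK: fixes q x :: real assumes q: "q \<noteq> 0" and x: "x^2 = q - 1"
  shows "- inverse q - (q - x * (2 * x)) / (q * q) - (q^2 - x * (4 * (x * q))) / q ^ 4 = (x^2 - 3) / q ^ 3"
proof -
  have xx: "x*x = q - 1" using x by (simp add: power2_eq_square)
  have a1: "x * (2 * x) = 2*(x*x)" "x * (4 * (x * q)) = 4*(x*x)*q" by (simp_all add: mult_ac)
  have e: "-inverse q - (q - 2*(q-1))/(q*q) - (q^2 - 4*(q-1)*q)/q^4 = (q-1-3)/q^3"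
    using q by (simp add: divide_simps) (simp add: algebra_simps eval_nat_numeral)
  show ?thesis unfolding a1 xx x using e by simp
qed

lemma K_deriv: "(Kf has_real_derivative (-(3 - x^2)/(1+x^2)^3)) (at x)"
  unfolding Kf_def
  apply (rule derivative_eq_intros refl | simp add: nzs)+
  using idK[of "1+x^2" x] nzs[of x] by simp

lemma idG: fixes q x :: real assumes q: "q \<noteq> 0" and x: "x^2 = q - 1"
  shows "- inverse q - (q - x * (2 * x)) / (q * q) = -2 / q^2"
proof -
  have a: "x * (2 * x) = 2*(q-1)" using x by (simp_all add: power2_eq_square algebra_simps)
  show ?thesis unfolding a using q by (simp add: field_simps) algebra
qed

definition Df :: "real \<Rightarrow> real" where "Df s = pi/2 - arctan s - s/(1+s^2)"
definition Gf :: "real \<Rightarrow> real" where "Gf s = s^2 * Df s"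

lemma G_deriv: "(Gf has_real_derivative (2*x*Kf x)) (at x)"
  unfolding Gf_def Df_def Kf_def
  apply (rule derivative_eq_intros refl | simp add: nzs)+
  apply (subst idG[of "1+x^2" x])
  using nzs[of x] by (simp_all add: field_simps power2_eq_square)



lemma K_lim: "(Kf \<longlongrightarrow> 0) at_top"
  unfolding Kf_def by real_asymp

lemma K_pos: assumes "0 \<le> x" "x \<le> 4851/4000" shows "Kf x > 0"
proof -
  have "Kf (4851/4000) \<le> Kf x"
  proof (rule DERIV_nonpos_imp_nonincreasing[OF assms(2)])
    fix t assume t: "x \<le> t" "t \<le> 4851/4000"
    have "t^2 \<le> (4851/4000)^2" using t assms(1) by (intro power_mono) auto
    moreover have "(4851/4000::real)^2 \<le> 3" by (simp add: power_divide)
    ultimately have "t^2 \<le> 3" by linarith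
    then have "-(3 - t^2)/(1+t^2)^3 \<le> 0" using nzs[of t] by (intro divide_nonpos_pos) auto
    then show "\<exists>y. (Kf has_real_derivative y) (at t) \<and> y \<le> 0" using K_deriv by blast
  qed
  then show ?thesis using K_lo by linarith
qed

lemma K_neg: assumes "4853/4000 \<le> x" shows "Kf x < 0"
proof (cases "x^2 \<le> 3")
  case True
  have "Kf x \<le> Kf (4853/4000)"
  proof (rule DERIV_nonpos_imp_nonincreasing[OF assms])
    fix t assume t: "4853/4000 \<le> t" "t \<le> x"
    have "t^2 \<le> x^2" using t by (intro power_mono) auto
    then have "t^2 \<le> 3" using True by simp
    then have "-(3 - t^2)/(1+t^2)^3 \<le> 0" using nzs[of t] by (intro divide_nonpos_pos) auto
    then show "\<exists>y. (Kf has_real_derivative y) (at t) \<and> y \<le> 0" using K_deriv by blast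
  qed
  then show ?thesis using K_hi by linarith
next
  case False
  have x0: "0 \<le> x" using assms by simp
  have pos: "-(3 - t^2)/(1+t^2)^3 > 0" if "x \<le> t" for t
  proof -
    have "x^2 \<le> t^2" using that x0 by (intro power_mono) auto
    then have "t^2 > 3" using False by simp
    then show ?thesis using nzs[of t] by (intro divide_pos_pos) auto
  qed
  have inc: "Kf x < Kf (x+1)"
    by (rule DERIV_pos_imp_increasing) (use K_deriv pos in auto)
  show ?thesis
  proof (rule ccontr)
    assume "\<not> Kf x < 0"
    then have lt: "0 < Kf (x+1)" using inc by linarith
    have "\<forall>\<^sub>F y in at_top. Kf y < Kf (x+1)" by (rule order_tendstoD(2)[OF K_lim lt])
    moreover have "\<forall>\<^sub>F y in at_top. Kf (x+1) \<le> Kf y"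
      using eventually_ge_at_top[of "x+1"]
    proof eventually_elim
      case (elim y)
      show ?case
      proof (rule DERIV_nonneg_imp_nondecreasing[OF elim])
        fix t assume t: "x + 1 \<le> t" "t \<le> y"
        show "\<exists>d. (Kf has_real_derivative d) (at t) \<and> 0 \<le> d"
          by (intro exI[of _ "-(3 - t^2)/(1+t^2)^3"] conjI K_deriv less_imp_le[OF pos]) (use t in simp)
      qed
    qed
    ultimately have "\<forall>\<^sub>F y in at_top. Kf y < Kf (x+1) \<and> Kf (x+1) \<le> Kf y" by (rule eventually_conj)
    then have "\<forall>\<^sub>F y::real in at_top. False" by (rule eventually_mono) auto
    then show False by (simp add: eventually_False)
  qed
qed

lemma G_inc: assumes "0 < x" "x < 4851/4000" shows "Gf x < Gf (4851/4000)"
proof (rule DERIV_pos_imp_increasing[OF assms(2)])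
  fix t assume t: "x \<le> t" "t \<le> 4851/4000"
  have "2*t*Kf t > 0" using K_pos[of t] t assms by auto
  then show "\<exists>y. (Gf has_real_derivative y) (at t) \<and> y > 0" using G_deriv by blast
qed

lemma G_dec: assumes "4853/4000 < x" shows "Gf x < Gf (4853/4000)"
proof (rule DERIV_neg_imp_decreasing[OF assms])
  fix t assume t: "4853/4000 \<le> t" "t \<le> x"
  have "Kf t < 0" using K_neg t by auto
  moreover have "t > 0" using t by linarith
  ultimately have "2*t*Kf t < 0" by (simp add: mult_pos_neg)
  then show "\<exists>y. (Gf has_real_derivative y) (at t) \<and> y < 0" using G_deriv by blast
qed

lemma G_max_exists: "\<exists>s0\<in>{4851/4000..4853/4000}. \<forall>s>0. Gf s \<le> Gf s0"
proof -
  have "continuous_on {4851/4000..4853/4000} Gf"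
    using G_deriv by (intro continuous_at_imp_continuous_on) (auto intro: DERIV_isCont)
  then obtain s0 where s0: "s0 \<in> {4851/4000..4853/4000::real}" and mx: "\<forall>y\<in>{4851/4000..4853/4000}. Gf y \<le> Gf s0"
    using continuous_attains_sup[of "{4851/4000..4853/4000::real}" Gf] by auto
  have "Gf s \<le> Gf s0" if "s > 0" for s
  proof -
    consider "s < 4851/4000" | "s \<in> {4851/4000..4853/4000}" | "4853/4000 < s" by force
    then show ?thesis
    proof cases
      case 1 then show ?thesis using G_inc[OF that 1] mx[rule_format, of "4851/4000"] by simp
    next
      case 2 then show ?thesis using mx by blast
    next
      case 3 then show ?thesis using G_dec[OF 3] mx[rule_format, of "4853/4000"] by simp
    qed
  qed
  with s0 show ?thesis by blast
qed

lemma G_max_loc: assumes "s0 > 0" "\<forall>s>0. Gf s \<le> Gf s0" shows "4851/4000 \<le> s0 \<and> s0 \<le> 4853/4000"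
proof (rule ccontr)
  assume "\<not> ?thesis"
  then consider "s0 < 4851/4000" | "4853/4000 < s0" by linarith
  then show False
  proof cases
    case 1 then show False using G_inc[OF assms(1) 1] assms(2)[rule_format, of "4851/4000"] by simp
  next
    case 2 then show False using G_dec[OF 2] assms(2)[rule_format, of "4853/4000"] by simp
  qed
qed


lemma g_G: assumes "c = xi * sqrt II" "c > 0"
  shows "g_speed II xi l = 8/(pi*c^2) * Gf (l*c/2)"
proof -
  have s: "l*xi * sqrt II/2 = l*c/2" using assms(1) by (simp add: mult.assoc)
  show ?thesis unfolding g_closed s Gf_def Df_def using assms(2)
    by (simp add: field_simps power2_eq_square)
qed

lemma alpha_A: assumes "c = xi * sqrt II"
  shows "alpha_acc II xi l = (pi - 2 * arctan (l*c/2)) / pi"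
proof -
  have s: "l*xi * sqrt II/2 = l*c/2" using assms(1) by (simp add: mult.assoc)
  show ?thesis unfolding alpha_closed s by (simp add: field_simps)
qed

lemma arctan_s_bounds: assumes "4851/4000 \<le> s" "s \<le> 4853/4000"
  shows "pi/4 + 95852/1000000 \<le> arctan s" "arctan s \<le> pi/4 + 96056/1000000"
proof -
  have a: "(851/8851) - (851/8851)^3/3 + (851/8851)^5/5 - (851/8851)^7/7 \<le> arctan (851/8851)" by (rule arctan_lb7) simp
  have p: "95852/1000000 \<le> (851/8851::real) - (851/8851)^3/3 + (851/8851)^5/5 - (851/8851)^7/7" by (simp add: power_divide)
  have m1: "arctan (4851/4000) \<le> arctan s" using assms(1) by (simp add: arctan_le_iff)
  show "pi/4 + 95852/1000000 \<le> arctan s" using a p m1 unfolding arctan_lo by linarith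
  have b: "arctan (853/8853) \<le> (853/8853) - (853/8853)^3/3 + (853/8853)^5/5" by (rule arctan_ub5) simp
  have q: "(853/8853::real) - (853/8853)^3/3 + (853/8853)^5/5 \<le> 96056/1000000" by (simp add: power_divide)
  have m2: "arctan s \<le> arctan (4853/4000)" using assms(2) by (simp add: arctan_le_iff)
  show "arctan s \<le> pi/4 + 96056/1000000" using b q m2 unfolding arctan_hi by linarith
qed

theorem corollary3:
  fixes II xi :: real
  assumes "II > 0" and "xi > 0"
  shows "(\<exists>l_opt > 0. \<forall>l > 0. g_speed II xi l \<le> g_speed II xi l_opt)
       \<and> (\<forall>l_opt > 0. (\<forall>l > 0. g_speed II xi l \<le> g_speed II xi l_opt) \<longrightarrow>
            \<bar>l_opt * xi * sqrt II - 2.426\<bar> \<le> 0.0005 \<and>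
            \<bar>alpha_acc II xi l_opt - 0.439\<bar> \<le> 0.0005)"
proof -
  define c where "c = xi * sqrt II"
  have c: "c > 0" unfolding c_def using assms by simp
  define M where "M = 8/(pi*c^2)"
  have M: "M > 0" unfolding M_def using c by simp
  have gG: "g_speed II xi l = M * Gf (l*c/2)" for l unfolding M_def by (rule g_G[OF c_def c])
  show ?thesis
  proof
    obtain s0 where s0: "s0 \<in> {4851/4000..4853/4000}" and mx: "\<forall>s>0. Gf s \<le> Gf s0"
      using G_max_exists by blast
    have s0p: "s0 > 0" using s0 by simp
    have e: "(2* s0/c)*c/2 = s0" using c by simp
    show "\<exists>l_opt > 0. \<forall>l > 0. g_speed II xi l \<le> g_speed II xi l_opt"
    proof (intro exI[of _ "2* s0/c"] conjI allI impI)
      show "2* s0/c > 0" using s0p c by simp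
      fix l :: real assume l: "l > 0"
      have "Gf (l*c/2) \<le> Gf s0" using mx l c by simp
      then show "g_speed II xi l \<le> g_speed II xi (2* s0/c)"
        unfolding gG e using M by (simp add: mult_left_mono)
    qed
  next
    show "\<forall>l_opt > 0. (\<forall>l > 0. g_speed II xi l \<le> g_speed II xi l_opt) \<longrightarrow>
            \<bar>l_opt * xi * sqrt II - 2.426\<bar> \<le> 0.0005 \<and>
            \<bar>alpha_acc II xi l_opt - 0.439\<bar> \<le> 0.0005"
    proof (intro allI impI)
      fix lo :: real assume lo: "lo > 0" and mxg: "\<forall>l>0. g_speed II xi l \<le> g_speed II xi lo"
      define s0 where "s0 = lo*c/2"
      have s0p: "s0 > 0" unfolding s0_def using lo c by simp
      have mxG: "\<forall>s>0. Gf s \<le> Gf s0"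
      proof (intro allI impI)
        fix s :: real assume s: "s > 0"
        have "g_speed II xi (2* s/c) \<le> g_speed II xi lo" using mxg s c by simp
        moreover have "(2* s/c)*c/2 = s" using c by simp
        ultimately have "M * Gf s \<le> M * Gf s0" unfolding gG s0_def by simp
        then show "Gf s \<le> Gf s0" using M by simp
      qed
      have loc: "4851/4000 \<le> s0" "s0 \<le> 4853/4000" using G_max_loc[OF s0p mxG] by auto
      have lx: "lo * xi * sqrt II = 2* s0" unfolding s0_def c_def by (simp add: mult.assoc)
      have d1: "(2.426::real) = 2426/1000" "(0.0005::real) = 5/10000" "(0.439::real) = 439/1000" by simp_all
      have A: "pi/4 + 95852/1000000 \<le> arctan s0" "arctan s0 \<le> pi/4 + 96056/1000000"
        using arctan_s_bounds[OF loc] by auto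
      have al: "alpha_acc II xi lo = (pi - 2 * arctan s0) / pi"
        unfolding alpha_A[OF c_def] s0_def ..
      have pip: "pi > 0" by simp
      have u: "(pi - 2 * arctan s0) / pi \<le> 4395/10000"
        using A pi_bnds pip by (simp add: pos_divide_le_eq)
      have v: "4385/10000 \<le> (pi - 2 * arctan s0) / pi"
        using A pi_bnds pip by (simp add: pos_le_divide_eq)
      show "\<bar>lo * xi * sqrt II - 2.426\<bar> \<le> 0.0005 \<and> \<bar>alpha_acc II xi lo - 0.439\<bar> \<le> 0.0005"
        unfolding d1 lx al abs_le_iff using loc u v by linarith
    qed
  qed
qed

end
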